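(* Let $(a,b,c)\in\mathbb{R}^3\setminus\{(0,0,0)\}$, $A_1=(a,b,c)$ and $A_2=(-ae^{c},-be^{-c},-c)$ (the point on the translation curve through the origin and $A_1$ symmetric to $A_1$ with respect to the origin), and let $0<\alpha<\pi$. A point $P=(x,y,z)\in\mathbf{Sol}\setminus\{A_1,A_2\}$ belongs to the translation-like $\alpha$-isoptic surface of the translation-like segment $\overline{A_1A_2}$ if and only if $$\cos\alpha=\frac{e^{z}(x+ae^{c})(x-a)+e^{-z}(y+be^{-c})(y-b)+4\sinh\frac{z+c}{2}\sinh\frac{z-c}{2}}{\sqrt{e^{z+c}(x-a)^2+e^{-(z+c)}(y-b)^2+4\sinh^2\frac{z-c}{2}}\;\sqrt{e^{z-c}(x+ae^{c})^2+e^{-(z-c)}(y+be^{-c})^2+4\sinh^2\frac{z+c}{2}}}.$$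
   Context: $\mathbf{Sol}$ is $\mathbb{R}^3$ with coordinates $(x,y,z)$, group law $(a,b,c)(x,y,z)=(x+ae^{-z},\,y+be^{z},\,z+c)$, and left-invariant metric $ds^2=e^{2z}dx^2+e^{-2z}dy^2+dz^2$. For $P=(p_1,p_2,p_3)$ let $T_P$ be the isometry $(X,Y,Z)\mapsto(p_1+Xe^{-p_3},\,p_2+Ye^{p_3},\,p_3+Z)$, which maps the origin to $P$. The translation curve starting at the origin with initial unit vector $(u,v,w)$ is $t\mapsto\big(-\tfrac{u}{w}(e^{-wt}-1),\tfrac{v}{w}(e^{wt}-1),wt\big)$ if $w\neq0$ and $t\mapsto(ut,vt,0)$ if $w=0$; every point of $\mathbf{Sol}$ lies on exactly one such curve from the origin (with $t\ge0$). The translation curve from $P$ to $Q$ is the image under $T_P$ of the translation curve from the origin to $T_P^{-1}(Q)$. A translation-like segment $\overline{A_1A_2}$ is the arc of a translation curve between $A_1$ and $A_2$ (only its endpoints matter here). The translation-like $\alpha$-isoptic surface of $\overline{A_1A_2}$ is the set of points $P\notin\{A_1,A_2\}$ such that the angle at $P$, measured with the metric at $P$, between the initial tangent vectors of the translation curves from $P$ to $A_1$ and from $P$ to $A_2$ equals $\alpha$. For $\alpha=\pi/2$ it is called the translation-like Thaloid. *)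

theory Defs
  imports "HOL-Analysis.Analysis"
begin

type_synonym pt = "real \<times> real \<times> real"

text \<open>Translation curve starting at the origin with initial vector d = (u,v,w).\<close>
definition tcurve :: "pt \<Rightarrow> real \<Rightarrow> pt" where
  "tcurve d t = (case d of (u, v, w) \<Rightarrow>
     if w \<noteq> 0 then (- (u / w) * (exp (- w * t) - 1), (v / w) * (exp (w * t) - 1), w * t)
     else (u * t, v * t, 0))"

definition unit_vec :: "pt \<Rightarrow> bool" where
  "unit_vec d = (case d of (u, v, w) \<Rightarrow> u^2 + v^2 + w^2 = 1)"

definition TP :: "pt \<Rightarrow> pt \<Rightarrow> pt" where
  "TP P X = (case P of (p1, p2, p3) \<Rightarrow> case X of (X1, X2, X3) \<Rightarrow>
     (p1 + X1 * exp (- p3), p2 + X2 * exp p3, p3 + X3))"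

definition TP_inv :: "pt \<Rightarrow> pt \<Rightarrow> pt" where
  "TP_inv P Q = (case P of (p1, p2, p3) \<Rightarrow> case Q of (q1, q2, q3) \<Rightarrow>
     ((q1 - p1) * exp p3, (q2 - p2) * exp (- p3), q3 - p3))"

text \<open>Initial unit vector of the translation curve from the origin to Q (Q not the origin).\<close>
definition init_dir :: "pt \<Rightarrow> pt" where
  "init_dir Q = (THE d. unit_vec d \<and> (\<exists>t\<ge>0. tcurve d t = Q))"

definition trans_curve :: "pt \<Rightarrow> pt \<Rightarrow> real \<Rightarrow> pt" where
  "trans_curve P Q t = TP P (tcurve (init_dir (TP_inv P Q)) t)"

definition init_tangent :: "pt \<Rightarrow> pt \<Rightarrow> pt" where
  "init_tangent P Q = vector_derivative (trans_curve P Q) (at 0)"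

definition sol_metric :: "pt \<Rightarrow> pt \<Rightarrow> pt \<Rightarrow> real" where
  "sol_metric P X Y = (case P of (p1, p2, p3) \<Rightarrow> case X of (X1, X2, X3) \<Rightarrow> case Y of (Y1, Y2, Y3) \<Rightarrow>
     exp (2 * p3) * X1 * Y1 + exp (- 2 * p3) * X2 * Y2 + X3 * Y3)"

definition sol_angle :: "pt \<Rightarrow> pt \<Rightarrow> pt \<Rightarrow> real" where
  "sol_angle P X Y = arccos (sol_metric P X Y /
      (sqrt (sol_metric P X X) * sqrt (sol_metric P Y Y)))"

definition isoptic :: "real \<Rightarrow> pt \<Rightarrow> pt \<Rightarrow> pt set" where
  "isoptic \<alpha> A1 A2 = {P. P \<noteq> A1 \<and> P \<noteq> A2 \<and>
      sol_angle P (init_tangent P A1) (init_tangent P A2) = \<alpha>}"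

end

theory Submission
  imports Defs
begin

definition gg :: "real \<Rightarrow> real" where "gg s = (if s = 0 then 1 else s / (1 - exp (- s)))"
definition hh :: "real \<Rightarrow> real" where "hh s = (if s = 0 then 1 else s / (exp s - 1))"

lemma tc_deriv:
  "vector_derivative (\<lambda>t. TP (p1,p2,p3) (tcurve (u,v,w) t)) (at 0) = (u * exp (-p3), v * exp p3, w)"
proof (cases "w = 0")
  case True
  have "((\<lambda>t. (p1 + u * t * exp (- p3), p2 + v * t * exp p3, p3 + 0))
      has_vector_derivative (u * exp (-p3), v * exp p3, w)) (at 0)"
    using True by (auto intro!: derivative_eq_intros has_vector_derivative_Pair)
  moreover have "(\<lambda>t. TP (p1,p2,p3) (tcurve (u,v,w) t)) = (\<lambda>t. (p1 + u * t * exp (- p3), p2 + v * t * exp p3, p3 + 0))"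
    using True by (auto simp: TP_def tcurve_def)
  ultimately show ?thesis by (simp add: vector_derivative_at)
next
  case False
  have e1: "((\<lambda>t. p1 + (- (u / w) * (exp (- w * t) - 1))*exp(-p3)) has_real_derivative u * exp (- p3)) (at 0)"
    using False by (auto intro!: derivative_eq_intros)
  have e2: "((\<lambda>t. p2 + ((v / w) * (exp (w * t) - 1))*exp p3) has_real_derivative v * exp p3) (at 0)"
    using False by (auto intro!: derivative_eq_intros)
  have "((\<lambda>t. (p1 + (- (u / w) * (exp (- w * t) - 1))*exp(-p3), p2 + ((v / w) * (exp (w * t) - 1))*exp p3, p3 + w*t))
      has_vector_derivative (u * exp (-p3), v * exp p3, w)) (at 0)"
    apply (intro has_vector_derivative_Pair)
    using e1 e2 by (auto intro!: derivative_eq_intros simp: has_real_derivative_iff_has_vector_derivative[symmetric])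
  moreover have "(\<lambda>t. TP (p1,p2,p3) (tcurve (u,v,w) t)) = (\<lambda>t. (p1 + (- (u / w) * (exp (- w * t) - 1))*exp(-p3), p2 + ((v / w) * (exp (w * t) - 1))*exp p3, p3 + w*t))"
    using False by (auto simp: TP_def tcurve_def)
  ultimately show ?thesis by (simp add: vector_derivative_at)
qed
lemma gg_pos: "gg s > 0"
proof (cases "s = 0")
  case False
  show ?thesis
  proof (cases "s > 0")
    case True then have "exp (-s) < 1" by simp
    then show ?thesis using True by (simp add: gg_def)
  next
    case f: False then have "exp (-s) > 1" using False by simp
    then show ?thesis using f False by (simp add: gg_def divide_neg_neg)
  qed
qed (simp add: gg_def)

lemma hh_pos: "hh s > 0"
proof (cases "s = 0")
  case False
  show ?thesis
  proof (cases "s > 0")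
    case True then have "exp s > 1" by simp
    then show ?thesis using True by (simp add: hh_def)
  next
    case f: False then have "exp s < 1" using False by simp
    then show ?thesis using f False by (simp add: hh_def divide_neg_neg)
  qed
qed (simp add: hh_def)

lemma fwd:
  assumes "tcurve (u,v,w) t = (q1,q2,q3)" "t \<noteq> 0"
  shows "q1 * gg q3 = t * u \<and> q2 * hh q3 = t * v \<and> q3 = t * w"
proof (cases "w = 0")
  case True
  then show ?thesis using assms by (auto simp: tcurve_def gg_def hh_def)
next
  case False
  then have q: "q1 = - (u / w) * (exp (- w * t) - 1)" "q2 = (v / w) * (exp (w * t) - 1)" "q3 = w*t"
    using assms by (auto simp: tcurve_def)
  have nz: "w*t \<noteq> 0" using False assms by simp
  have a: "exp (- w*t) \<noteq> 1" "exp (w*t) \<noteq> 1" using nz by auto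
  have a': "1 - exp (- (w*t)) \<noteq> 0" "exp (w*t) - 1 \<noteq> 0" using a by auto
  show ?thesis using nz a' False unfolding q gg_def hh_def by (simp add: field_simps)
qed

lemma tc0: "tcurve d 0 = (0,0,0)" by (auto simp: tcurve_def split: prod.splits)

lemma init_dir_eq:
  assumes "(q1,q2,q3) \<noteq> (0,0,0)"
  defines "N \<equiv> sqrt ((q1*gg q3)^2 + (q2*hh q3)^2 + q3^2)"
  shows "init_dir (q1,q2,q3) = (q1*gg q3/N, q2*hh q3/N, q3/N) \<and> unit_vec (q1*gg q3/N, q2*hh q3/N, q3/N)"
proof -
  have Npos: "N > 0"
  proof -
    have "(q1*gg q3)^2 + (q2*hh q3)^2 + q3^2 > 0"
      using assms(1) gg_pos[of q3] hh_pos[of q3] by (auto simp: add_pos_nonneg add_nonneg_pos)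
    then show ?thesis unfolding N_def by simp
  qed
  have NN: "N^2 = (q1*gg q3)^2 + (q2*hh q3)^2 + q3^2" unfolding N_def by simp
  let ?d = "(q1*gg q3/N, q2*hh q3/N, q3/N)"
  have ex: "unit_vec ?d \<and> (\<exists>t\<ge>0. tcurve ?d t = (q1,q2,q3))"
  proof
    have "(q1*gg q3/N)^2 + (q2*hh q3/N)^2 + (q3/N)^2 = ((q1*gg q3)^2 + (q2*hh q3)^2 + q3^2) / N^2"
      by (simp add: power_divide add_divide_distrib)
    also have "\<dots> = 1" using Npos NN by (metis div_self less_numeral_extra(3) zero_less_power)
    finally show "unit_vec ?d" by (simp add: unit_vec_def)
    show "\<exists>t\<ge>0. tcurve ?d t = (q1,q2,q3)"
    proof (intro exI[of _ N] conjI)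
      show "0 \<le> N" using Npos by simp
      show "tcurve ?d N = (q1,q2,q3)"
      proof (cases "q3 = 0")
        case True then show ?thesis using Npos by (simp add: tcurve_def gg_def hh_def)
      next
        case False
        have a': "1 - exp (- q3) \<noteq> 0" "exp q3 - 1 \<noteq> 0" using False by auto
        show ?thesis using False Npos a' by (simp add: tcurve_def gg_def hh_def field_simps)
      qed
    qed
  qed
  have "init_dir (q1,q2,q3) = ?d" unfolding init_dir_def
  proof (rule the_equality)
    show "unit_vec ?d \<and> (\<exists>t\<ge>0. tcurve ?d t = (q1,q2,q3))" by (rule ex)
  next
    fix d assume h: "unit_vec d \<and> (\<exists>t\<ge>0. tcurve d t = (q1,q2,q3))"
    obtain u v w where d: "d = (u,v,w)" by (cases d) auto
    obtain t where t: "t \<ge> 0" "tcurve d t = (q1,q2,q3)" using h by auto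
    have "t \<noteq> 0" using t assms(1) tc0[of d] by auto
    then have tp: "t > 0" using t by simp
    have f: "q1 * gg q3 = t * u \<and> q2 * hh q3 = t * v \<and> q3 = t * w" proof -
      have "tcurve (u,v,w) t = (q1,q2,q3)" using t d by simp
      then show ?thesis using fwd tp by simp
    qed
    have un: "u^2 + v^2 + w^2 = 1" using h d by (simp add: unit_vec_def)
    have "N^2 = t^2 * (u^2 + v^2 + w^2)"
    proof -
      have "N^2 = (t * u)^2 + (t * v)^2 + (t * w)^2" using NN f by metis
      then show ?thesis by (simp add: power_mult_distrib algebra_simps)
    qed
    then have "N^2 = t^2" using un by simp
    then have "N = t" using Npos tp by (simp add: power2_eq_iff)
    then show "d = ?d" using f d tp by auto
  qed
  then show ?thesis using ex by simp
qed
lemma exp_split: "(u::real) + v = w \<Longrightarrow> exp w = exp u * exp v" by (drule sym) (simp add: exp_add)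

lemma hh_gg: "hh s = gg s * exp (- s)"
proof (cases "s = 0")
  case False
  have a': "1 - exp (- s) \<noteq> 0" "exp s - 1 \<noteq> 0" using False by auto
  have "exp s * exp (-s) = 1" by (simp add: exp_minus)
  then show ?thesis using False a' by (simp add: gg_def hh_def field_simps)
qed (simp add: gg_def hh_def)

lemma gg_sinh: "gg s * exp (- s / 2) * (2 * sinh (s / 2)) = s"
proof (cases "s = 0")
  case False
  have a': "1 - exp (- s) \<noteq> 0" using False by auto
  have e1: "exp (- s / 2) * exp (s/2) = 1" by (simp add: exp_minus)
  have e2: "exp (- s / 2) * exp (- s/2) = exp (- s)" using exp_split[of "-s/2" "-s/2" "-s"] by simp
  have "exp (- s / 2) * (2 * sinh (s / 2)) = 1 - exp (- s)"
    unfolding sinh_def using e1 e2 by (simp add: algebra_simps)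
  then have "gg s * exp (- s / 2) * (2 * sinh (s / 2)) = gg s * (1 - exp (- s))" by (simp add: mult.assoc)
  then show ?thesis using False a' by (simp add: gg_def)
qed (simp add: gg_def)

lemma Vrel:
  assumes "m = z + s / 2"
  defines "k \<equiv> - gg s * exp (- s / 2)"
  shows "A * exp z * gg s = k * (exp m * (- A))"
    and "B * exp (- z) * hh s = k * (exp (- m) * (- B))"
    and "s = k * (2 * sinh (- s / 2))"
proof -
  have "exp z = exp (- s / 2) * exp m" using exp_split[of "-s/2" m z] assms(1) by simp
  then show "A * exp z * gg s = k * (exp m * (- A))" unfolding k_def by simp
  have "exp (- z) * exp (- s) = exp (- s / 2) * exp (- m)"
    using exp_split[of "-z" "-s" "-z-s"] exp_split[of "-s/2" "-m" "-z-s"] assms(1) by simp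
  then show "B * exp (- z) * hh s = k * (exp (- m) * (- B))" unfolding k_def hh_gg
    by (metis (no_types, opaque_lifting) minus_mult_minus mult.assoc mult.commute)
  show "s = k * (2 * sinh (- s / 2))" unfolding k_def using gg_sinh[of s] by simp
qed

lemma dot_scale:
  fixes V1 V2 V3 W1 W2 W3 V1' V2' V3' W1' W2' W3' k1 k2 :: real
  assumes "V1 = k1*W1" "V2 = k1*W2" "V3 = k1*W3" "V1' = k2*W1'" "V2' = k2*W2'" "V3' = k2*W3'" "k1*k2 > 0"
  defines "N \<equiv> sqrt (V1^2 + V2^2 + V3^2)" and "N' \<equiv> sqrt (V1'^2 + V2'^2 + V3'^2)"
  shows "(V1/N)*(V1'/N') + (V2/N)*(V2'/N') + (V3/N)*(V3'/N')
     = (W1*W1'+W2*W2'+W3*W3') / (sqrt (W1^2+W2^2+W3^2) * sqrt (W1'^2+W2'^2+W3'^2))"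
proof -
  have N: "N = \<bar>k1\<bar> * sqrt (W1^2+W2^2+W3^2)"
  proof -
    have "V1^2 + V2^2 + V3^2 = k1^2 * (W1^2+W2^2+W3^2)" by (simp add: assms(1-3) power_mult_distrib algebra_simps)
    then show ?thesis unfolding N_def by (simp add: real_sqrt_mult)
  qed
  have N': "N' = \<bar>k2\<bar> * sqrt (W1'^2+W2'^2+W3'^2)"
  proof -
    have "V1'^2 + V2'^2 + V3'^2 = k2^2 * (W1'^2+W2'^2+W3'^2)" by (simp add: assms(4-6) power_mult_distrib algebra_simps)
    then show ?thesis unfolding N'_def by (simp add: real_sqrt_mult)
  qed
  have kk: "\<bar>k1\<bar> * \<bar>k2\<bar> = k1 * k2" using assms(7) by (simp add: abs_mult[symmetric])
  have "(V1/N)*(V1'/N') + (V2/N)*(V2'/N') + (V3/N)*(V3'/N') = (V1*V1'+V2*V2'+V3*V3')/(N*N')"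
    by (simp add: add_divide_distrib)
  also have "\<dots> = (k1*k2) * (W1*W1'+W2*W2'+W3*W3') / ((\<bar>k1\<bar> * \<bar>k2\<bar>) * (sqrt (W1^2+W2^2+W3^2) * sqrt (W1'^2+W2'^2+W3'^2)))"
    unfolding N N' assms(1-6) by (simp add: algebra_simps)
  also have "\<dots> = (W1*W1'+W2*W2'+W3*W3') / (sqrt (W1^2+W2^2+W3^2) * sqrt (W1'^2+W2'^2+W3'^2))"
  proof -
    have "k1 \<noteq> 0" "k2 \<noteq> 0" using assms(7) by auto
    then show ?thesis unfolding kk by simp
  qed
  finally show ?thesis .
qed


lemma init_tangent_eq:
  assumes "init_dir (TP_inv (p1,p2,p3) A) = (u,v,w)"
  shows "init_tangent (p1,p2,p3) A = (u * exp (-p3), v * exp p3, w)"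
proof -
  have "trans_curve (p1,p2,p3) A = (\<lambda>t. TP (p1,p2,p3) (tcurve (u,v,w) t))"
    by (rule ext) (simp add: trans_curve_def assms)
  then show ?thesis unfolding init_tangent_def using tc_deriv by simp
qed

lemma angle_unit:
  assumes "u^2 + v^2 + w^2 = 1" "u'^2 + v'^2 + w'^2 = 1"
  shows "sol_angle (p1,p2,p3) (u * exp (-p3), v * exp p3, w) (u' * exp (-p3), v' * exp p3, w')
         = arccos (u * u' + v * v' + w * w')"
proof -
  have e1: "exp (2*p3) * exp (-p3) * exp (-p3) = 1" by (simp add: mult_exp_exp)
  have e2: "exp (- 2*p3) * exp p3 * exp p3 = 1" by (simp add: mult_exp_exp)
  have g: "\<And>u v w u' v' w'. sol_metric (p1,p2,p3) (u * exp (-p3), v * exp p3, w) (u' * exp (-p3), v' * exp p3, w')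
      = u * u' + v * v' + w * w'"
  proof -
    fix u v w u' v' w' :: real
    have "sol_metric (p1,p2,p3) (u * exp (-p3), v * exp p3, w) (u' * exp (-p3), v' * exp p3, w')
      = (exp (2*p3) * exp (-p3) * exp (-p3)) * u * u' + (exp (- 2*p3) * exp p3 * exp p3) * v * v' + w * w'"
      by (simp add: sol_metric_def algebra_simps)
    then show "sol_metric (p1,p2,p3) (u * exp (-p3), v * exp p3, w) (u' * exp (-p3), v' * exp p3, w')
      = u * u' + v * v' + w * w'" using e1 e2 by simp
  qed
  show ?thesis unfolding sol_angle_def g using assms by (simp add: power2_eq_square)
qed

lemma dot_bound:
  fixes u v w u' v' w' :: real
  assumes "u^2 + v^2 + w^2 = 1" "u'^2 + v'^2 + w'^2 = 1"
  shows "-1 \<le> u * u' + v * v' + w * w' \<and> u * u' + v * v' + w * w' \<le> 1"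
proof -
  have "0 \<le> (u-u')^2 + (v-v')^2 + (w-w')^2" by simp
  also have "\<dots> = (u^2 + v^2 + w^2) + (u'^2 + v'^2 + w'^2) - 2*(u * u' + v * v' + w * w')" by (simp add: power2_eq_square algebra_simps)
  finally have 1: "u * u' + v * v' + w * w' \<le> 1" using assms by simp
  have "0 \<le> (u+u')^2 + (v+v')^2 + (w+w')^2" by simp
  also have "\<dots> = (u^2 + v^2 + w^2) + (u'^2 + v'^2 + w'^2) + 2*(u * u' + v * v' + w * w')" by (simp add: power2_eq_square algebra_simps)
  finally have 2: "-1 \<le> u * u' + v * v' + w * w'" using assms by simp
  show ?thesis using 1 2 by simp
qed

lemma arccos_iff:
  assumes "-1 \<le> r" "r \<le> 1" "0 < \<alpha>" "\<alpha> < pi"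
  shows "arccos r = \<alpha> \<longleftrightarrow> cos \<alpha> = r"
  using assms arccos_cos[of \<alpha>] cos_arccos[of r] by auto

theorem theorem4p1:
  fixes a b c x y z \<alpha> :: real
  assumes "(a, b, c) \<noteq> (0, 0, 0)"
    and "0 < \<alpha>" and "\<alpha> < pi"
    and "(x, y, z) \<noteq> (a, b, c)"
    and "(x, y, z) \<noteq> (- a * exp c, - b * exp (- c), - c)"
  shows "(x, y, z) \<in> isoptic \<alpha> (a, b, c) (- a * exp c, - b * exp (- c), - c) \<longleftrightarrow>
    cos \<alpha> =
      (exp z * (x + a * exp c) * (x - a) + exp (- z) * (y + b * exp (- c)) * (y - b)
        + 4 * sinh ((z + c) / 2) * sinh ((z - c) / 2))
      / (sqrt (exp (z + c) * (x - a)^2 + exp (- (z + c)) * (y - b)^2 + 4 * (sinh ((z - c) / 2))^2)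
         * sqrt (exp (z - c) * (x + a * exp c)^2 + exp (- (z - c)) * (y + b * exp (- c))^2
                 + 4 * (sinh ((z + c) / 2))^2))"
proof -
  define A1 where "A1 = (a, b, c)"
  define A2 where "A2 = (- a * exp c, - b * exp (- c), - c)"
  have Q1: "TP_inv (x,y,z) A1 = ((a - x) * exp z, (b - y) * exp (- z), c - z)"
    by (simp add: TP_inv_def A1_def)
  have Q2: "TP_inv (x,y,z) A2 = ((- a * exp c - x) * exp z, (- b * exp (- c) - y) * exp (- z), - c - z)"
    by (simp add: TP_inv_def A2_def)
  have nz1: "((a - x) * exp z, (b - y) * exp (- z), c - z) \<noteq> (0,0,0)" using assms(4) by auto
  have nz2: "((- a * exp c - x) * exp z, (- b * exp (- c) - y) * exp (- z), - c - z) \<noteq> (0,0,0)"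
    using assms(5) by auto
  define V1 where "V1 = (a - x) * exp z * gg (c - z)"
  define V2 where "V2 = (b - y) * exp (- z) * hh (c - z)"
  define V3 where "V3 = c - z"
  define V1' where "V1' = (- a * exp c - x) * exp z * gg (- c - z)"
  define V2' where "V2' = (- b * exp (- c) - y) * exp (- z) * hh (- c - z)"
  define V3' where "V3' = - c - z"
  define N where "N = sqrt (V1^2 + V2^2 + V3^2)"
  define N' where "N' = sqrt (V1'^2 + V2'^2 + V3'^2)"
  have d1: "init_dir (TP_inv (x,y,z) A1) = (V1/N, V2/N, V3/N)" and u1: "unit_vec (V1/N, V2/N, V3/N)"
    using init_dir_eq[OF nz1] unfolding Q1 V1_def V2_def V3_def N_def by auto
  have d2: "init_dir (TP_inv (x,y,z) A2) = (V1'/N', V2'/N', V3'/N')" and u2: "unit_vec (V1'/N', V2'/N', V3'/N')"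
    using init_dir_eq[OF nz2] unfolding Q2 V1'_def V2'_def V3'_def N'_def by auto
  have u1': "(V1/N)^2 + (V2/N)^2 + (V3/N)^2 = 1" using u1 by (simp add: unit_vec_def)
  have u2': "(V1'/N')^2 + (V2'/N')^2 + (V3'/N')^2 = 1" using u2 by (simp add: unit_vec_def)
  define r where "r = (V1/N)*(V1'/N') + (V2/N)*(V2'/N') + (V3/N)*(V3'/N')"
  have ang: "sol_angle (x,y,z) (init_tangent (x,y,z) A1) (init_tangent (x,y,z) A2) = arccos r"
    unfolding init_tangent_eq[OF d1] init_tangent_eq[OF d2] r_def
    by (rule angle_unit[OF u1' u2'])
  have rb: "-1 \<le> r" "r \<le> 1" using dot_bound[OF u1' u2'] unfolding r_def by auto
  define k1 where "k1 = - gg (c - z) * exp (- (c - z) / 2)"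
  define k2 where "k2 = - gg (- c - z) * exp (- (- c - z) / 2)"
  have k1n: "k1 < 0" unfolding k1_def using gg_pos[of "c - z"] by simp
  have k2n: "k2 < 0" unfolding k2_def using gg_pos[of "- c - z"] by simp
  have kk: "k1 * k2 > 0" using k1n k2n by (simp add: mult_neg_neg)
  define W1 where "W1 = exp ((z + c) / 2) * (- (a - x))"
  define W2 where "W2 = exp (- ((z + c) / 2)) * (- (b - y))"
  define W3 where "W3 = 2 * sinh (- (c - z) / 2)"
  define W1' where "W1' = exp ((z - c) / 2) * (- (- a * exp c - x))"
  define W2' where "W2' = exp (- ((z - c) / 2)) * (- (- b * exp (- c) - y))"
  define W3' where "W3' = 2 * sinh (- (- c - z) / 2)"
  have m1: "(z + c) / 2 = z + (c - z) / 2" by (simp add: field_simps)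
  have m2: "(z - c) / 2 = z + (- c - z) / 2" by (simp add: field_simps)
  have r_eq: "r = (W1*W1'+W2*W2'+W3*W3') / (sqrt (W1^2+W2^2+W3^2) * sqrt (W1'^2+W2'^2+W3'^2))"
    unfolding r_def N_def N'_def
  proof (rule dot_scale[OF _ _ _ _ _ _ kk])
    show "V1 = k1 * W1" unfolding V1_def k1_def W1_def by (rule Vrel(1)[OF m1])
    show "V2 = k1 * W2" unfolding V2_def k1_def W2_def by (rule Vrel(2)[OF m1])
    show "V3 = k1 * W3" unfolding V3_def k1_def W3_def by (rule Vrel(3)[OF m1])
    show "V1' = k2 * W1'" unfolding V1'_def k2_def W1'_def by (rule Vrel(1)[OF m2])
    show "V2' = k2 * W2'" unfolding V2'_def k2_def W2'_def by (rule Vrel(2)[OF m2])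
    show "V3' = k2 * W3'" unfolding V3'_def k2_def W3'_def by (rule Vrel(3)[OF m2])
  qed
  have E1: "exp z = exp ((z + c) / 2) * exp ((z - c) / 2)" by (rule exp_split) (simp add: field_simps)
  have E2: "exp (- z) = exp (- ((z + c) / 2)) * exp (- ((z - c) / 2))" by (rule exp_split) (simp add: field_simps)
  have E3: "exp (z + c) = (exp ((z + c) / 2))^2" unfolding power2_eq_square by (rule exp_split) (simp add: field_simps)
  have E4: "exp (- (z + c)) = (exp (- ((z + c) / 2)))^2" unfolding power2_eq_square by (rule exp_split) (simp add: field_simps)
  have E5: "exp (z - c) = (exp ((z - c) / 2))^2" unfolding power2_eq_square by (rule exp_split) (simp add: field_simps)
  have E6: "exp (- (z - c)) = (exp (- ((z - c) / 2)))^2" unfolding power2_eq_square by (rule exp_split) (simp add: field_simps)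
  have S1: "sinh (- (c - z) / 2) = sinh ((z - c) / 2)" by (rule arg_cong[where f=sinh]) simp
  have S2: "sinh (- (- c - z) / 2) = sinh ((z + c) / 2)" by (rule arg_cong[where f=sinh]) simp
  have num: "W1*W1'+W2*W2'+W3*W3' = exp z * (x + a * exp c) * (x - a) + exp (- z) * (y + b * exp (- c)) * (y - b)
        + 4 * sinh ((z + c) / 2) * sinh ((z - c) / 2)"
    unfolding E1 E2 W1_def W2_def W3_def W1'_def W2'_def W3'_def S1 S2 by (simp add: algebra_simps)
  have den1: "W1^2+W2^2+W3^2 = exp (z + c) * (x - a)^2 + exp (- (z + c)) * (y - b)^2 + 4 * (sinh ((z - c) / 2))^2"
    unfolding E3 E4 W1_def W2_def W3_def S1 by (simp add: power2_eq_square algebra_simps)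
  have den2: "W1'^2+W2'^2+W3'^2 = exp (z - c) * (x + a * exp c)^2 + exp (- (z - c)) * (y + b * exp (- c))^2
                 + 4 * (sinh ((z + c) / 2))^2"
    unfolding E5 E6 W1'_def W2'_def W3'_def S2 by (simp add: power2_eq_square algebra_simps)
  have "(x, y, z) \<in> isoptic \<alpha> A1 A2 \<longleftrightarrow> arccos r = \<alpha>"
    using assms(4,5) ang unfolding isoptic_def A1_def A2_def by auto
  also have "\<dots> \<longleftrightarrow> cos \<alpha> = r" by (rule arccos_iff[OF rb assms(2,3)])
  finally show ?thesis unfolding r_eq num den1 den2 A1_def A2_def .
qed

end
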